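(* Consider the closed-loop system $\dot p_i=\mathrm{sat}(v_i^{\mathrm{ms}}(\mathbf p)+v_i^{\mathrm{cv}}(\mathbf p))$, $i=1,\dots,n$, defined in the context (i.e., with every robot using the true masses $P_k(\mathbf p)$). Then from any initial state $\mathbf p(t_0)\in\mathbb{R}^{dn}$, the solution $\mathbf p(t)$ converges to the set $\mathcal{D}=\{\mathbf p\in\mathbb{R}^{dn}:\nabla_{\mathbf p}F(\mathbf p)=0\}$ as $t\to\infty$.
   Context: Setting: $n\ge2$ robots in $\mathbb{R}^d$, positions $p_i\in\mathbb{R}^d$, configuration $\mathbf p=[p_1^\top,\dots,p_n^\top]^\top\in\mathbb{R}^{dn}$; fixed sample points $q_1,\dots,q_m\in\mathbb{R}^d$; constants $\beta>0$, $\sigma_1>0$, $\sigma_2>0$, $\varepsilon\in(0,1)$, $r_{\mathrm{avoid}}>0$, $v_{\max}>0$. Mass: $P_k(\mathbf p)=\frac1n\sum_{i=1}^n e^{-\beta\|q_k-p_i\|^2}$. Error metric: $F(\mathbf p)=F_{\max}(\mathbf p)+F_{\mathrm{uni}}(\mathbf p)$ with $F_{\max}=-\ln\sqrt{\sum_{k=1}^mP_k^2}$ and $F_{\mathrm{uni}}=-\frac1m\sum_{k=1}^m\ln\sqrt{mP_k^2/\sum_{l=1}^mP_l^2}$. Meanshift command: $v_i^{\mathrm{ms}}(\mathbf p)=\dfrac{\frac{\sigma_1}{m}\sum_{k=1}^m P_k(\mathbf p)^{-1}e^{-\beta\|q_k-p_i\|^2}(q_k-p_i)}{\sum_{k=1}^m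 P_k(\mathbf p)^{-1}e^{-\beta\|q_k-p_i\|^2}}$. Repulsive term: $\tilde v_i^{\mathrm{cv}}=\sigma_2\sum_{j\ne i,\ \|p_i-p_j\|\le r_{\mathrm{avoid}}}\frac{r_{\mathrm{avoid}}-\|p_i-p_j\|}{\|p_i-p_j\|+\varepsilon}(p_i-p_j)$. With $\varphi=\min\{\|v_i^{\mathrm{ms}}\|^2/\varepsilon,1\}$, the gain is $\kappa_2=\varphi$ if $(v_i^{\mathrm{ms}})^\top\tilde v_i^{\mathrm{cv}}\ge0$ and $\kappa_2=\varphi\min\{-(1-\varepsilon)\|v_i^{\mathrm{ms}}\|^2/((v_i^{\mathrm{ms}})^\top\tilde v_i^{\mathrm{cv}}),1\}$ if $(v_i^{\mathrm{ms}})^\top\tilde v_i^{\mathrm{cv}}<0$; collision-avoidance command $v_i^{\mathrm{cv}}=\kappa_2\tilde v_i^{\mathrm{cv}}$. Saturation: $\mathrm{sat}(z)=v_{\max}z/\|z\|$ if $\|z\|>v_{\max}$, and $\mathrm{sat}(z)=z$ otherwise. *)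

theory Defs
  imports "HOL-Analysis.Analysis"
begin

text \<open>Robots are indexed by a finite type 'n (n = CARD('n)), sample points by a
finite type 'k (m = CARD('k)); positions live in real^'d, and a configuration
x :: (real^'d)^'n is the stacked vector p in R^(dn) (with its Euclidean norm).\<close>

definition mass :: "real \<Rightarrow> ('k \<Rightarrow> real^'d) \<Rightarrow> (real^'d)^'n::finite \<Rightarrow> 'k \<Rightarrow> real" where
  "mass \<beta> q x k = (1 / real CARD('n)) * (\<Sum>i\<in>UNIV. exp (- \<beta> * (norm (q k - x$i))\<^sup>2))"

definition F_max :: "real \<Rightarrow> ('k::finite \<Rightarrow> real^'d) \<Rightarrow> (real^'d)^'n::finite \<Rightarrow> real" where
  "F_max \<beta> q x = - ln (sqrt (\<Sum>k\<in>UNIV. (mass \<beta> q x k)\<^sup>2))"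

definition F_uni :: "real \<Rightarrow> ('k::finite \<Rightarrow> real^'d) \<Rightarrow> (real^'d)^'n::finite \<Rightarrow> real" where
  "F_uni \<beta> q x = - (1 / real CARD('k)) *
     (\<Sum>k\<in>UNIV. ln (sqrt (real CARD('k) * (mass \<beta> q x k)\<^sup>2 / (\<Sum>l\<in>UNIV. (mass \<beta> q x l)\<^sup>2))))"

definition F_err :: "real \<Rightarrow> ('k::finite \<Rightarrow> real^'d) \<Rightarrow> (real^'d)^'n::finite \<Rightarrow> real" where
  "F_err \<beta> q x = F_max \<beta> q x + F_uni \<beta> q x"

definition v_ms :: "real \<Rightarrow> real \<Rightarrow> ('k::finite \<Rightarrow> real^'d) \<Rightarrow> (real^'d)^'n::finite \<Rightarrow> 'n \<Rightarrow> real^'d" where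
  "v_ms \<beta> \<sigma>1 q x i =
     (1 / (\<Sum>k\<in>UNIV. inverse (mass \<beta> q x k) * exp (- \<beta> * (norm (q k - x$i))\<^sup>2))) *\<^sub>R
     ((\<sigma>1 / real CARD('k)) *\<^sub>R
       (\<Sum>k\<in>UNIV. (inverse (mass \<beta> q x k) * exp (- \<beta> * (norm (q k - x$i))\<^sup>2)) *\<^sub>R (q k - x$i)))"

definition v_cv_tilde :: "real \<Rightarrow> real \<Rightarrow> real \<Rightarrow> (real^'d)^'n::finite \<Rightarrow> 'n \<Rightarrow> real^'d" where
  "v_cv_tilde \<sigma>2 \<epsilon> r_avoid x i =
     \<sigma>2 *\<^sub>R (\<Sum>j\<in>{j. j \<noteq> i \<and> norm (x$i - x$j) \<le> r_avoid}.
        ((r_avoid - norm (x$i - x$j)) / (norm (x$i - x$j) + \<epsilon>)) *\<^sub>R (x$i - x$j))"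

definition kappa2 :: "real \<Rightarrow> real^'d \<Rightarrow> real^'d \<Rightarrow> real" where
  "kappa2 \<epsilon> vms vt =
     (let \<phi> = min ((norm vms)\<^sup>2 / \<epsilon>) 1 in
      if vms \<bullet> vt \<ge> 0 then \<phi>
      else \<phi> * min (- (1 - \<epsilon>) * (norm vms)\<^sup>2 / (vms \<bullet> vt)) 1)"

definition v_cv :: "real \<Rightarrow> real \<Rightarrow> real \<Rightarrow> real \<Rightarrow> real \<Rightarrow> ('k::finite \<Rightarrow> real^'d) \<Rightarrow> (real^'d)^'n::finite \<Rightarrow> 'n \<Rightarrow> real^'d" where
  "v_cv \<beta> \<sigma>1 \<sigma>2 \<epsilon> r_avoid q x i =
     kappa2 \<epsilon> (v_ms \<beta> \<sigma>1 q x i) (v_cv_tilde \<sigma>2 \<epsilon> r_avoid x i) *\<^sub>R v_cv_tilde \<sigma>2 \<epsilon> r_avoid x i"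

definition sat :: "real \<Rightarrow> real^'d \<Rightarrow> real^'d" where
  "sat v_max z = (if norm z > v_max then (v_max / norm z) *\<^sub>R z else z)"

definition closed_loop :: "real \<Rightarrow> real \<Rightarrow> real \<Rightarrow> real \<Rightarrow> real \<Rightarrow> real \<Rightarrow> ('k::finite \<Rightarrow> real^'d) \<Rightarrow> (real^'d)^'n::finite \<Rightarrow> (real^'d)^'n" where
  "closed_loop \<beta> \<sigma>1 \<sigma>2 \<epsilon> r_avoid v_max q x =
     (\<chi> i. sat v_max (v_ms \<beta> \<sigma>1 q x i + v_cv \<beta> \<sigma>1 \<sigma>2 \<epsilon> r_avoid q x i))"

definition crit_set :: "real \<Rightarrow> ('k::finite \<Rightarrow> real^'d) \<Rightarrow> ((real^'d)^'n::finite) set" where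
  "crit_set \<beta> q = {x. (F_err \<beta> q has_derivative (\<lambda>h. 0)) (at x)}"

end

theory Submission
  imports Defs
begin


definition ek :: "real \<Rightarrow> ('k \<Rightarrow> real^'d) \<Rightarrow> (real^'d)^'n::finite \<Rightarrow> 'k \<Rightarrow> 'n \<Rightarrow> real" where
  "ek \<beta> q x k i = exp (- \<beta> * (norm (q k - x$i))\<^sup>2)"

lemma mass_ek: "mass \<beta> q x k = (1 / real CARD('n)) * (\<Sum>i\<in>UNIV. ek \<beta> q x k i)"
  for x :: "(real^'d)^'n::finite"
  by (simp add: mass_def ek_def)

lemma mass_pos: "mass \<beta> q x k > 0"
  unfolding mass_def by (intro mult_pos_pos sum_pos) auto

lemma mass_nz[simp]: "mass \<beta> q x k \<noteq> 0"
  using mass_pos[of \<beta> q x k] by linarith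

lemma mass_le1: fixes x :: "(real^'d)^'n::finite" assumes "\<beta> \<ge> 0" shows "mass \<beta> q x k \<le> 1"
proof -
  have "(\<Sum>i\<in>(UNIV::'n set). exp (- \<beta> * (norm (q k - x$i))\<^sup>2)) \<le> (\<Sum>i\<in>(UNIV::'n set). 1)"
    by (intro sum_mono) (use assms in \<open>auto simp: mult_nonneg_nonneg\<close>)
  thus ?thesis unfolding mass_def by (simp add: field_simps)
qed

lemma F_simp:
  fixes q :: "'k::finite \<Rightarrow> real^'d" and x :: "(real^'d)^'n::finite"
  shows "F_err \<beta> q x = - ln (real CARD('k)) / 2 - (1 / real CARD('k)) * (\<Sum>k\<in>UNIV. ln (mass \<beta> q x k))"
proof -
  define S where "S = (\<Sum>l\<in>UNIV. (mass \<beta> q x l)\<^sup>2)"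
  define m where "m = real CARD('k)"
  have mp: "m > 0" by (simp add: m_def)
  have Sp: "S > 0" unfolding S_def by (intro sum_pos) (auto simp: mass_pos)
  have Fm: "F_max \<beta> q x = - ln S / 2" unfolding F_max_def S_def[symmetric]
    using Sp by (simp add: ln_sqrt)
  have "ln (sqrt (m * (mass \<beta> q x k)\<^sup>2 / S)) = (ln m + 2 * ln (mass \<beta> q x k) - ln S) / 2" for k
  proof -
    have "ln (sqrt (m * (mass \<beta> q x k)\<^sup>2 / S)) = ln (m * (mass \<beta> q x k)\<^sup>2 / S) / 2"
      using mp Sp mass_pos[of \<beta> q x k] by (simp add: ln_sqrt)
    also have "ln (m * (mass \<beta> q x k)\<^sup>2 / S) = ln m + 2 * ln (mass \<beta> q x k) - ln S"
      using mp Sp mass_pos[of \<beta> q x k] by (simp add: ln_div ln_mult ln_realpow)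
    finally show ?thesis .
  qed
  note e = this
  have "F_uni \<beta> q x = - (1/m) * (\<Sum>k\<in>UNIV. (ln m + 2 * ln (mass \<beta> q x k) - ln S) / 2)"
    unfolding F_uni_def S_def[symmetric] m_def[symmetric] by (subst e[symmetric]) simp
  also have "\<dots> = - (1/m) * ((m * ln m - m * ln S)/2 + (\<Sum>k\<in>UNIV. ln (mass \<beta> q x k)))"
    by (simp add: sum_divide_distrib[symmetric] sum.distrib sum_subtractf sum_distrib_left[symmetric] m_def field_simps)
  also have "\<dots> = - ln m / 2 + ln S / 2 - (1/m) * (\<Sum>k\<in>UNIV. ln (mass \<beta> q x k))"
    using mp by (simp add: field_simps)
  finally show ?thesis unfolding F_err_def m_def Fm by simp
qed



lemma has_derivative_vec_nth' [derivative_intros]: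
  "(f has_derivative f') F \<Longrightarrow> ((\<lambda>x. f x $ i) has_derivative (\<lambda>h. f' h $ i)) F"
  by (rule bounded_linear.has_derivative[OF bounded_linear_vec_nth])

lemma ek_deriv:
  fixes x :: "(real^'d)^'n::finite"
  shows "((\<lambda>x. ek \<beta> q x k i) has_derivative (\<lambda>h. ek \<beta> q x k i * (2 * \<beta> * ((q k - x$i) \<bullet> h$i)))) (at x)"
proof -
  have e: "(\<lambda>x::(real^'d)^'n. ek \<beta> q x k i) = (\<lambda>x. exp (- \<beta> * ((q k - x$i) \<bullet> (q k - x$i))))"
    by (simp add: ek_def power2_norm_eq_inner)
  show ?thesis unfolding e
    apply (rule derivative_eq_intros refl)+
    apply (simp add: ek_def power2_norm_eq_inner algebra_simps inner_commute)
    done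
qed



definition G :: "real \<Rightarrow> ('k::finite \<Rightarrow> real^'d) \<Rightarrow> (real^'d)^'n::finite \<Rightarrow> 'n \<Rightarrow> real^'d" where
  "G \<beta> q x i = (- (2 * \<beta> / (real CARD('n) * real CARD('k)))) *\<^sub>R
     (\<Sum>k\<in>UNIV. (inverse (mass \<beta> q x k) * ek \<beta> q x k i) *\<^sub>R (q k - x$i))"

lemma mass_deriv:
  fixes x :: "(real^'d)^'n::finite"
  shows "((\<lambda>x. mass \<beta> q x k) has_derivative
     (\<lambda>h. (1 / real CARD('n)) * (\<Sum>i\<in>UNIV. ek \<beta> q x k i * (2 * \<beta> * ((q k - x$i) \<bullet> h$i))))) (at x)"
  unfolding mass_ek
  by (intro has_derivative_mult_right has_derivative_sum ek_deriv)

lemma F_deriv: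
  fixes x :: "(real^'d)^'n::finite" and q :: "'k::finite \<Rightarrow> real^'d"
  shows "(F_err \<beta> q has_derivative (\<lambda>h. \<Sum>i\<in>UNIV. G \<beta> q x i \<bullet> h$i)) (at x)"
proof -
  have e: "F_err \<beta> q = (\<lambda>x. - ln (real CARD('k)) / 2 - (1 / real CARD('k)) * (\<Sum>k\<in>UNIV. ln (mass \<beta> q x k)))"
    by (rule ext) (rule F_simp)
  show ?thesis unfolding e
    apply (rule derivative_eq_intros refl mass_deriv mass_pos | simp)+
    apply (simp add: G_def inner_sum_left sum_distrib_left sum_divide_distrib[symmetric])
    apply (rule ext)
    apply (simp add: sum_distrib_right sum_negf[symmetric] sum_divide_distrib[symmetric])
    apply (subst sum.swap)
    apply (simp only: sum_negf sum_divide_distrib[symmetric])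
    apply (intro arg_cong[where f="\<lambda>s. - (s / _)"] sum.cong refl)
    apply (simp add: mult_ac)
    done
qed



definition W :: "real \<Rightarrow> ('k::finite \<Rightarrow> real^'d) \<Rightarrow> (real^'d)^'n::finite \<Rightarrow> 'n \<Rightarrow> real" where
  "W \<beta> q x i = (\<Sum>k\<in>UNIV. inverse (mass \<beta> q x k) * ek \<beta> q x k i)"

lemma W_pos: "W \<beta> q x i > 0"
  unfolding W_def by (intro sum_pos) (auto simp: ek_def mass_pos)

lemma ek_le_mass: fixes x :: "(real^'d)^'n::finite"
  shows "ek \<beta> q x k i \<le> real CARD('n) * mass \<beta> q x k"
proof -
  have "ek \<beta> q x k i \<le> (\<Sum>j\<in>UNIV. ek \<beta> q x k j)"
    by (rule member_le_sum) (auto simp: ek_def)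
  thus ?thesis by (simp add: mass_ek)
qed

lemma W_le: fixes x :: "(real^'d)^'n::finite" and q :: "'k::finite \<Rightarrow> real^'d"
  shows "W \<beta> q x i \<le> real CARD('k) * real CARD('n)"
proof -
  have "W \<beta> q x i \<le> (\<Sum>k\<in>(UNIV::'k set). real CARD('n))"
    unfolding W_def
  proof (rule sum_mono)
    fix k
    show "inverse (mass \<beta> q x k) * ek \<beta> q x k i \<le> real CARD('n)"
      using ek_le_mass[of \<beta> q x k i] mass_pos[of \<beta> q x k]
      by (simp add: pos_divide_le_eq divide_inverse_commute[symmetric] mult.commute)
  qed
  thus ?thesis by simp
qed

lemma G_vms: fixes x :: "(real^'d)^'n::finite" and q :: "'k::finite \<Rightarrow> real^'d"
  assumes "\<sigma>1 > 0"
  shows "G \<beta> q x i = (- (2 * \<beta> * W \<beta> q x i / (real CARD('n) * \<sigma>1))) *\<^sub>R v_ms \<beta> \<sigma>1 q x i"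
  using assms W_pos[of \<beta> q x i] less_imp_neq[OF W_pos[of \<beta> q x i]]
  unfolding G_def v_ms_def W_def[symmetric] ek_def[symmetric]
  by (simp add: field_simps)

lemma kappa2_bounds: assumes "0 < \<epsilon>" "\<epsilon> < 1"
  shows "0 \<le> kappa2 \<epsilon> v w" "kappa2 \<epsilon> v w \<le> 1"
proof -
  define \<phi> where "\<phi> = min ((norm v)\<^sup>2 / \<epsilon>) 1"
  have p: "0 \<le> \<phi>" "\<phi> \<le> 1" using assms by (auto simp: \<phi>_def)
  have "0 \<le> kappa2 \<epsilon> v w \<and> kappa2 \<epsilon> v w \<le> 1"
  proof (cases "v \<bullet> w \<ge> 0")
    case True thus ?thesis using p by (simp add: kappa2_def \<phi>_def[symmetric] Let_def)
  next
    case False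
    define m where "m = min (- (1 - \<epsilon>) * (norm v)\<^sup>2 / (v \<bullet> w)) 1"
    have "0 \<le> - (1 - \<epsilon>) * (norm v)\<^sup>2 / (v \<bullet> w)"
      using False assms by (intro divide_nonpos_neg) (auto simp: mult_nonpos_nonneg)
    hence m: "0 \<le> m" "m \<le> 1" by (auto simp: m_def)
    have "kappa2 \<epsilon> v w = \<phi> * m" using False by (simp add: kappa2_def \<phi>_def[symmetric] m_def Let_def)
    thus ?thesis using p m by (simp add: mult_le_one)
  qed
  thus "0 \<le> kappa2 \<epsilon> v w" "kappa2 \<epsilon> v w \<le> 1" by auto
qed

lemma kappa2_inner: assumes "0 < \<epsilon>" "\<epsilon> < 1"
  shows "v \<bullet> (v + kappa2 \<epsilon> v w *\<^sub>R w) \<ge> \<epsilon> * (norm v)\<^sup>2"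
proof -
  define \<phi> where "\<phi> = min ((norm v)\<^sup>2 / \<epsilon>) 1"
  have p: "0 \<le> \<phi>" "\<phi> \<le> 1" using assms by (auto simp: \<phi>_def)
  have vv: "v \<bullet> v = (norm v)\<^sup>2" by (simp add: power2_norm_eq_inner)
  have "kappa2 \<epsilon> v w * (v \<bullet> w) \<ge> - (1 - \<epsilon>) * (norm v)\<^sup>2"
  proof (cases "v \<bullet> w \<ge> 0")
    case True
    hence "kappa2 \<epsilon> v w * (v \<bullet> w) \<ge> 0" using kappa2_bounds(1)[OF assms, of v w] by (simp add: mult_nonneg_nonneg)
    moreover have "- (1 - \<epsilon>) * (norm v)\<^sup>2 \<le> 0" using assms by (simp add: mult_nonpos_nonneg)
    ultimately show ?thesis by linarith
  next
    case False
    define m where "m = min (- (1 - \<epsilon>) * (norm v)\<^sup>2 / (v \<bullet> w)) 1"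
    have "0 \<le> - (1 - \<epsilon>) * (norm v)\<^sup>2 / (v \<bullet> w)"
      using False assms by (intro divide_nonpos_neg) (auto simp: mult_nonpos_nonneg)
    hence m: "0 \<le> m" "m \<le> 1" by (auto simp: m_def)
    have k: "kappa2 \<epsilon> v w = \<phi> * m" using False by (simp add: kappa2_def \<phi>_def[symmetric] m_def Let_def)
    have "m \<le> - (1 - \<epsilon>) * (norm v)\<^sup>2 / (v \<bullet> w)" by (simp add: m_def)
    hence "m * (v \<bullet> w) \<ge> - (1 - \<epsilon>) * (norm v)\<^sup>2"
      using False by (simp add: pos_le_divide_eq neg_le_divide_eq)
    moreover have "m * (v \<bullet> w) \<le> 0" using m False by (simp add: mult_nonneg_nonpos)
    moreover have "1 * (m * (v \<bullet> w)) \<le> \<phi> * (m * (v \<bullet> w))"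
      by (rule mult_right_mono_neg[OF p(2)]) fact
    ultimately have "\<phi> * (m * (v \<bullet> w)) \<ge> - (1 - \<epsilon>) * (norm v)\<^sup>2"
      by linarith
    thus ?thesis using k by (simp add: mult.assoc)
  qed
  thus ?thesis by (simp add: inner_add_right vv algebra_simps)
qed

definition satl :: "real \<Rightarrow> real^'d \<Rightarrow> real" where
  "satl v_max z = (if norm z > v_max then v_max / norm z else 1)"

lemma sat_satl: "sat v_max z = satl v_max z *\<^sub>R z"
  by (simp add: sat_def satl_def)

lemma satl_pos: "v_max > 0 \<Longrightarrow> satl v_max z > 0"
proof -
  assume a: "v_max > 0"
  show ?thesis
  proof (cases "norm z > v_max")
    case True
    hence "norm z > 0" using a by linarith
    thus ?thesis using True a by (simp add: satl_def)
  qed (simp add: satl_def)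
qed

lemma satl_lower: assumes "v_max > 0" "norm z \<le> U" "U > 0"
  shows "satl v_max z \<ge> min 1 (v_max / U)"
proof (cases "norm z > v_max")
  case True
  hence "norm z > 0" using assms by linarith
  hence "v_max / U \<le> v_max / norm z" using assms
    by (intro divide_left_mono) auto
  thus ?thesis using True by (simp add: satl_def)
qed (simp add: satl_def)

lemma norm_sat: "v_max > 0 \<Longrightarrow> norm (sat v_max z) \<le> v_max"
  by (simp add: sat_def)



lemma wavg_norm:
  fixes z :: "'k \<Rightarrow> 'a::real_normed_vector"
  assumes "finite A" "\<And>k. k \<in> A \<Longrightarrow> w k > 0" "\<And>k. k \<in> A \<Longrightarrow> norm (z k) \<le> B" "B \<ge> 0"
  shows "norm ((1 / (\<Sum>k\<in>A. w k)) *\<^sub>R (\<Sum>k\<in>A. w k *\<^sub>R z k)) \<le> B"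
proof -
  have S0: "(\<Sum>k\<in>A. w k) \<ge> 0" using assms(2) by (intro sum_nonneg) (auto intro: less_imp_le)
  have "norm (\<Sum>k\<in>A. w k *\<^sub>R z k) \<le> (\<Sum>k\<in>A. norm (w k *\<^sub>R z k))" by (rule norm_sum)
  also have "\<dots> \<le> (\<Sum>k\<in>A. w k * B)"
  proof (rule sum_mono)
    fix k assume k: "k \<in> A"
    show "norm (w k *\<^sub>R z k) \<le> w k * B"
      using assms(2)[OF k] assms(3)[OF k] by (simp add: abs_of_pos mult_left_mono)
  qed
  also have "\<dots> = (\<Sum>k\<in>A. w k) * B" by (simp add: sum_distrib_right)
  finally have *: "norm (\<Sum>k\<in>A. w k *\<^sub>R z k) \<le> (\<Sum>k\<in>A. w k) * B" .
  show ?thesis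
  proof (cases "(\<Sum>k\<in>A. w k) = 0")
    case True thus ?thesis using assms(4) by simp
  next
    case False
    hence "(\<Sum>k\<in>A. w k) > 0" using S0 by linarith
    thus ?thesis using * by (simp add: divide_le_eq mult.commute)
  qed
qed

lemma wavg_inner:
  fixes q :: "'k \<Rightarrow> 'a::real_inner"
  assumes "finite A" "A \<noteq> {}" "\<And>k. k \<in> A \<Longrightarrow> w k > 0" "\<And>k. k \<in> A \<Longrightarrow> norm (q k) \<le> R0"
  shows "y \<bullet> ((1 / (\<Sum>k\<in>A. w k)) *\<^sub>R (\<Sum>k\<in>A. w k *\<^sub>R (q k - y))) \<le> R0 * norm y - (norm y)\<^sup>2"
proof -
  have Sp: "(\<Sum>k\<in>A. w k) > 0" using assms by (intro sum_pos) auto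
  have "y \<bullet> (\<Sum>k\<in>A. w k *\<^sub>R (q k - y)) = (\<Sum>k\<in>A. w k * (y \<bullet> q k - (norm y)\<^sup>2))"
    by (simp add: inner_sum_right inner_diff_right power2_norm_eq_inner)
  also have "\<dots> \<le> (\<Sum>k\<in>A. w k * (R0 * norm y - (norm y)\<^sup>2))"
  proof (intro sum_mono mult_left_mono)
    fix k assume k: "k \<in> A"
    have "y \<bullet> q k \<le> norm y * norm (q k)" using Cauchy_Schwarz_ineq2[of y "q k"] by simp
    also have "\<dots> \<le> norm y * R0" using assms(4)[OF k] by (intro mult_left_mono) auto
    finally show "y \<bullet> q k - (norm y)\<^sup>2 \<le> R0 * norm y - (norm y)\<^sup>2" by (simp add: mult.commute)
    show "0 \<le> w k" using assms(3)[OF k] by simp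
  qed
  also have "\<dots> = (\<Sum>k\<in>A. w k) * (R0 * norm y - (norm y)\<^sup>2)" by (simp add: sum_distrib_right)
  finally show ?thesis using Sp by (simp add: divide_le_eq mult.commute)
qed

definition R0 :: "('k::finite \<Rightarrow> real^'d) \<Rightarrow> real" where
  "R0 q = (\<Sum>k\<in>UNIV. norm (q k))"

lemma normq_le_R0: "norm (q k) \<le> R0 q"
  unfolding R0_def by (rule member_le_sum) auto

lemma R0_nonneg: "R0 q \<ge> 0"
  unfolding R0_def by (intro sum_nonneg) auto

lemma vms_alt: fixes x :: "(real^'d)^'n::finite" and q :: "'k::finite \<Rightarrow> real^'d"
  shows "v_ms \<beta> \<sigma>1 q x i = (\<sigma>1 / real CARD('k)) *\<^sub>R ((1 / (\<Sum>k\<in>UNIV. inverse (mass \<beta> q x k) * ek \<beta> q x k i)) *\<^sub>R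
       (\<Sum>k\<in>UNIV. (inverse (mass \<beta> q x k) * ek \<beta> q x k i) *\<^sub>R (q k - x$i)))"
  unfolding v_ms_def ek_def by (simp add: scaleR_right.sum mult.commute)

lemma vms_norm: fixes x :: "(real^'d)^'n::finite" and q :: "'k::finite \<Rightarrow> real^'d"
  assumes "\<sigma>1 > 0"
  shows "norm (v_ms \<beta> \<sigma>1 q x i) \<le> (\<sigma>1 / real CARD('k)) * (R0 q + norm (x$i))"
proof -
  define A where "A = (1 / (\<Sum>k\<in>UNIV. inverse (mass \<beta> q x k) * ek \<beta> q x k i)) *\<^sub>R
       (\<Sum>k\<in>UNIV. (inverse (mass \<beta> q x k) * ek \<beta> q x k i) *\<^sub>R (q k - x$i))"
  have h: "norm A \<le> R0 q + norm (x$i)"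
    unfolding A_def
  proof (rule wavg_norm)
    fix k :: 'k
    show "0 < inverse (mass \<beta> q x k) * ek \<beta> q x k i" by (simp add: mass_pos ek_def)
    show "norm (q k - x $ i) \<le> R0 q + norm (x $ i)"
      using norm_triangle_ineq4[of "q k" "x$i"] normq_le_R0[of q k] by linarith
  qed (auto intro: add_nonneg_nonneg R0_nonneg)
  have c: "\<bar>\<sigma>1 / real CARD('k)\<bar> = \<sigma>1 / real CARD('k)" using assms by simp
  show ?thesis unfolding vms_alt A_def[symmetric] norm_scaleR c
    by (rule mult_left_mono[OF h]) (use assms in simp)
qed

lemma vms_inner: fixes x :: "(real^'d)^'n::finite" and q :: "'k::finite \<Rightarrow> real^'d"
  assumes "\<sigma>1 > 0"
  shows "x$i \<bullet> v_ms \<beta> \<sigma>1 q x i \<le> (\<sigma>1 / real CARD('k)) * (R0 q * norm (x$i) - (norm (x$i))\<^sup>2)"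
proof -
  have "x$i \<bullet> ((1 / (\<Sum>k\<in>UNIV. inverse (mass \<beta> q x k) * ek \<beta> q x k i)) *\<^sub>R
       (\<Sum>k\<in>UNIV. (inverse (mass \<beta> q x k) * ek \<beta> q x k i) *\<^sub>R (q k - x$i))) \<le> R0 q * norm (x$i) - (norm (x$i))\<^sup>2"
  proof (rule wavg_inner)
    fix k :: 'k
    show "0 < inverse (mass \<beta> q x k) * ek \<beta> q x k i" by (simp add: mass_pos ek_def)
    show "norm (q k) \<le> R0 q" by (rule normq_le_R0)
  qed auto
  thus ?thesis unfolding vms_alt inner_scaleR_right
    by (rule mult_left_mono) (use assms in simp)
qed

lemma vcvt_norm: fixes x :: "(real^'d)^'n::finite"
  assumes "\<sigma>2 > 0" "\<epsilon> > 0" "r > 0"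
  shows "norm (v_cv_tilde \<sigma>2 \<epsilon> r x i) \<le> \<sigma>2 * (real CARD('n) * r)"
proof -
  let ?J = "{j. j \<noteq> i \<and> norm (x$i - x$j) \<le> r}"
  have "norm (\<Sum>j\<in>?J. ((r - norm (x$i - x$j)) / (norm (x$i - x$j) + \<epsilon>)) *\<^sub>R (x$i - x$j))
        \<le> (\<Sum>j\<in>?J. norm (((r - norm (x$i - x$j)) / (norm (x$i - x$j) + \<epsilon>)) *\<^sub>R (x$i - x$j)))"
    by (rule norm_sum)
  also have "\<dots> \<le> (\<Sum>j\<in>?J. r)"
  proof (rule sum_mono)
    fix j assume "j \<in> ?J"
    hence dj: "norm (x$i - x$j) \<le> r" by simp
    define d where "d = norm (x$i - x$j)"
    have d0: "d \<ge> 0" by (simp add: d_def)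
    have "\<bar>(r - d) / (d + \<epsilon>)\<bar> * d \<le> r"
    proof -
      have "\<bar>(r - d) / (d + \<epsilon>)\<bar> = (r - d) / (d + \<epsilon>)" using dj d0 assms by (simp add: d_def)
      moreover have "(r - d) * d \<le> r * (d + \<epsilon>)" using d0 assms dj
        by (simp add: algebra_simps d_def)
      ultimately show ?thesis using d0 assms by (simp add: divide_le_eq mult.commute mult.left_commute)
    qed
    thus "norm (((r - norm (x$i - x$j)) / (norm (x$i - x$j) + \<epsilon>)) *\<^sub>R (x$i - x$j)) \<le> r"
      by (simp add: d_def)
  qed
  also have "\<dots> = real (card ?J) * r" by simp
  also have "\<dots> \<le> real CARD('n) * r"
    by (rule mult_right_mono) (use assms in \<open>auto simp: card_mono\<close>)
  finally show ?thesis unfolding v_cv_tilde_def using assms by (simp add: mult_left_mono)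
qed



context
  fixes \<beta> \<sigma>1 \<sigma>2 \<epsilon> r vmax :: real
  assumes pos: "\<beta> > 0" "\<sigma>1 > 0" "\<sigma>2 > 0" "\<epsilon> > 0" "\<epsilon> < 1" "r > 0" "vmax > 0"
begin

lemma cl_nth: "closed_loop \<beta> \<sigma>1 \<sigma>2 \<epsilon> r vmax q x $ i =
   sat vmax (v_ms \<beta> \<sigma>1 q x i + v_cv \<beta> \<sigma>1 \<sigma>2 \<epsilon> r q x i)"
  by (simp add: closed_loop_def)

lemma u_inner: "v_ms \<beta> \<sigma>1 q x i \<bullet> (v_ms \<beta> \<sigma>1 q x i + v_cv \<beta> \<sigma>1 \<sigma>2 \<epsilon> r q x i)
   \<ge> \<epsilon> * (norm (v_ms \<beta> \<sigma>1 q x i))\<^sup>2"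
  unfolding v_cv_def using kappa2_inner pos by blast

lemma u_norm: fixes x :: "(real^'d)^'n::finite" and q :: "'k::finite \<Rightarrow> real^'d"
  shows "norm (v_ms \<beta> \<sigma>1 q x i + v_cv \<beta> \<sigma>1 \<sigma>2 \<epsilon> r q x i)
    \<le> (\<sigma>1 / real CARD('k)) * (R0 q + norm (x$i)) + \<sigma>2 * (real CARD('n) * r)"
proof -
  have "norm (v_cv \<beta> \<sigma>1 \<sigma>2 \<epsilon> r q x i) \<le> \<sigma>2 * (real CARD('n) * r)"
  proof -
    have "norm (v_cv \<beta> \<sigma>1 \<sigma>2 \<epsilon> r q x i) \<le> 1 * norm (v_cv_tilde \<sigma>2 \<epsilon> r x i)"
      unfolding v_cv_def norm_scaleR
      using kappa2_bounds[OF pos(4,5), of "v_ms \<beta> \<sigma>1 q x i" "v_cv_tilde \<sigma>2 \<epsilon> r x i"]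
      by (intro mult_right_mono) auto
    thus ?thesis using vcvt_norm[OF pos(3,4,6), of x i] by simp
  qed
  thus ?thesis using vms_norm[OF pos(2), of \<beta> q x i] norm_triangle_ineq[of "v_ms \<beta> \<sigma>1 q x i" "v_cv \<beta> \<sigma>1 \<sigma>2 \<epsilon> r q x i"]
    by linarith
qed

lemma dissip: fixes x :: "(real^'d)^'n::finite" and q :: "'k::finite \<Rightarrow> real^'d"
  shows "G \<beta> q x i \<bullet> closed_loop \<beta> \<sigma>1 \<sigma>2 \<epsilon> r vmax q x $ i \<le>
     - (\<sigma>1 * \<epsilon> / (2 * \<beta> * real CARD('k))) * satl vmax (v_ms \<beta> \<sigma>1 q x i + v_cv \<beta> \<sigma>1 \<sigma>2 \<epsilon> r q x i)
       * (norm (G \<beta> q x i))\<^sup>2"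
proof -
  define v where "v = v_ms \<beta> \<sigma>1 q x i"
  define u where "u = v_ms \<beta> \<sigma>1 q x i + v_cv \<beta> \<sigma>1 \<sigma>2 \<epsilon> r q x i"
  define a where "a = 2 * \<beta> * W \<beta> q x i / (real CARD('n) * \<sigma>1)"
  define s where "s = satl vmax u"
  define m where "m = real CARD('k)"
  have m0: "m > 0" by (simp add: m_def)
  have a0: "a > 0" unfolding a_def using pos W_pos[of \<beta> q x i] by simp
  have amax: "a \<le> 2 * \<beta> * m / \<sigma>1"
  proof -
    have "a = (2 * \<beta> / \<sigma>1) * (W \<beta> q x i / real CARD('n))" by (simp add: a_def field_simps)
    also have "\<dots> \<le> (2 * \<beta> / \<sigma>1) * m"
      using W_le[of \<beta> q x i] pos by (intro mult_left_mono) (auto simp: m_def divide_le_eq)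
    finally show ?thesis by simp
  qed
  have s0: "s > 0" unfolding s_def using satl_pos pos by blast
  have Gv: "G \<beta> q x i = (- a) *\<^sub>R v" unfolding v_def a_def using G_vms[OF pos(2)] by simp
  have vu: "v \<bullet> u \<ge> \<epsilon> * (norm v)\<^sup>2" unfolding v_def u_def by (rule u_inner)
  have "G \<beta> q x i \<bullet> closed_loop \<beta> \<sigma>1 \<sigma>2 \<epsilon> r vmax q x $ i = - (s * a) * (v \<bullet> u)"
    unfolding cl_nth sat_satl u_def[symmetric] s_def[symmetric] Gv by simp
  also have "\<dots> \<le> - (s * a) * (\<epsilon> * (norm v)\<^sup>2)"
    using vu s0 a0 by (simp add: mult_left_mono)
  also have "\<dots> = - (s * \<epsilon>) * (a * (norm v)\<^sup>2)" by simp
  also have "\<dots> \<le> - (s * \<epsilon>) * ((\<sigma>1 / (2 * \<beta> * m)) * (norm (G \<beta> q x i))\<^sup>2)"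
  proof -
    have "(norm (G \<beta> q x i))\<^sup>2 = a * (a * (norm v)\<^sup>2)" unfolding Gv using a0 by (simp add: power2_eq_square)
    also have "\<dots> \<le> (2 * \<beta> * m / \<sigma>1) * (a * (norm v)\<^sup>2)"
      using amax a0 by (intro mult_right_mono) auto
    finally have "(\<sigma>1 / (2 * \<beta> * m)) * (norm (G \<beta> q x i))\<^sup>2 \<le> a * (norm v)\<^sup>2"
      using pos m0 by (simp add: field_simps)
    thus ?thesis using s0 pos by (intro mult_left_mono_neg) auto
  qed
  finally show ?thesis by (simp add: s_def u_def m_def field_simps)
qed

definition Rb :: "('k::finite \<Rightarrow> real^'d) \<Rightarrow> 'n::finite itself \<Rightarrow> real" where
  "Rb q _ = R0 q + real CARD('k) * \<sigma>2 * real CARD('n) * r / \<sigma>1"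

lemma barrier: fixes x :: "(real^'d)^'n::finite" and q :: "'k::finite \<Rightarrow> real^'d"
  assumes "norm (x$i) \<ge> Rb q TYPE('n)"
  shows "x$i \<bullet> closed_loop \<beta> \<sigma>1 \<sigma>2 \<epsilon> r vmax q x $ i \<le> 0"
proof -
  define v where "v = v_ms \<beta> \<sigma>1 q x i"
  define w where "w = v_cv_tilde \<sigma>2 \<epsilon> r x i"
  define \<kappa> where "\<kappa> = kappa2 \<epsilon> v w"
  define m where "m = real CARD('k)"
  define y where "y = norm (x$i)"
  have m0: "m > 0" by (simp add: m_def)
  have y0: "y \<ge> 0" by (simp add: y_def)
  have k: "0 \<le> \<kappa>" "\<kappa> \<le> 1" unfolding \<kappa>_def using kappa2_bounds[OF pos(4,5)] by auto
  have "x$i \<bullet> (v + \<kappa> *\<^sub>R w) = x$i \<bullet> v + \<kappa> * (x$i \<bullet> w)" by (simp add: inner_add_right)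
  also have "\<dots> \<le> (\<sigma>1 / m) * (R0 q * y - y\<^sup>2) + y * (\<sigma>2 * (real CARD('n) * r))"
  proof -
    have 1: "x$i \<bullet> v \<le> (\<sigma>1 / m) * (R0 q * y - y\<^sup>2)"
      unfolding v_def m_def y_def by (rule vms_inner[OF pos(2)])
    have "x$i \<bullet> w \<le> y * norm w" unfolding y_def by (rule Cauchy_Schwarz_ineq2[THEN abs_le_D1])
    also have "\<dots> \<le> y * (\<sigma>2 * (real CARD('n) * r))"
      unfolding w_def using y0 vcvt_norm[OF pos(3,4,6), of x i] by (rule mult_left_mono[rotated])
    finally have 2: "x$i \<bullet> w \<le> y * (\<sigma>2 * (real CARD('n) * r))" .
    have "\<kappa> * (x$i \<bullet> w) \<le> y * (\<sigma>2 * (real CARD('n) * r))"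
    proof (cases "x$i \<bullet> w \<ge> 0")
      case True
      hence "\<kappa> * (x$i \<bullet> w) \<le> 1 * (x$i \<bullet> w)" using k by (intro mult_right_mono) auto
      thus ?thesis using 2 by simp
    next
      case False
      hence "\<kappa> * (x$i \<bullet> w) \<le> 0" using k by (simp add: mult_nonneg_nonpos)
      thus ?thesis using y0 pos by (smt (verit) mult_nonneg_nonneg of_nat_0_le_iff)
    qed
    thus ?thesis using 1 by linarith
  qed
  also have "\<dots> = y * (\<sigma>1 / m) * (Rb q TYPE('n) - y)"
    unfolding Rb_def m_def using pos by (simp add: field_simps power2_eq_square)
  also have "\<dots> \<le> 0"
    using assms y0 pos m0 unfolding y_def by (intro mult_nonneg_nonpos) auto
  finally have "x$i \<bullet> (v + \<kappa> *\<^sub>R w) \<le> 0" .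
  moreover have "closed_loop \<beta> \<sigma>1 \<sigma>2 \<epsilon> r vmax q x $ i = satl vmax (v + \<kappa> *\<^sub>R w) *\<^sub>R (v + \<kappa> *\<^sub>R w)"
    unfolding cl_nth sat_satl v_cv_def v_def w_def \<kappa>_def ..
  ultimately show ?thesis using satl_pos[OF pos(7), of "v + \<kappa> *\<^sub>R w"]
    by (simp add: mult_nonneg_nonpos)
qed

end



lemma chain_real:
  assumes "(p has_vector_derivative v) (at t)" "(g has_derivative g') (at (p t))"
  shows "((\<lambda>t. g (p t)) has_real_derivative g' v) (at t)"
proof -
  have "((\<lambda>t. g (p t)) has_derivative (\<lambda>s. g' (s *\<^sub>R v))) (at t)"
    using has_derivative_compose[OF assms(1)[unfolded has_vector_derivative_def] assms(2)] .
  moreover have "(\<lambda>s. g' (s *\<^sub>R v)) = (*) (g' v)"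
    using linear_scale[OF has_derivative_linear[OF assms(2)]] by (auto simp: mult.commute)
  ultimately show ?thesis by (simp add: has_field_derivative_def)
qed

lemma normsq_deriv:
  fixes x :: "(real^'d)^'n::finite"
  shows "((\<lambda>x. (norm (x$i))\<^sup>2) has_derivative (\<lambda>h. 2 * (x$i \<bullet> h$i))) (at x)"
proof -
  have e: "(\<lambda>x::(real^'d)^'n. (norm (x$i))\<^sup>2) = (\<lambda>x. x$i \<bullet> x$i)"
    by (simp add: power2_norm_eq_inner)
  show ?thesis unfolding e
    by (rule derivative_eq_intros refl)+ (simp add: inner_commute)
qed

lemma norm_vec_le_sum: "norm (x :: 'a::real_normed_vector^'n::finite) \<le> (\<Sum>i\<in>UNIV. norm (x$i))"
  unfolding norm_vec_def by (rule L2_set_le_sum) auto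

context
  fixes \<beta> \<sigma>1 \<sigma>2 \<epsilon> r vmax t0 :: real and q :: "'k::finite \<Rightarrow> real^'d"
    and p :: "real \<Rightarrow> (real^'d)^'n::finite"
  assumes pos: "\<beta> > 0" "\<sigma>1 > 0" "\<sigma>2 > 0" "\<epsilon> > 0" "\<epsilon> < 1" "r > 0" "vmax > 0"
    and sol: "\<forall>t\<ge>t0. (p has_vector_derivative
               closed_loop \<beta> \<sigma>1 \<sigma>2 \<epsilon> r vmax q (p t)) (at t within {t0..})"
begin

lemma p_at: "t > t0 \<Longrightarrow> (p has_vector_derivative closed_loop \<beta> \<sigma>1 \<sigma>2 \<epsilon> r vmax q (p t)) (at t)"
  using sol[rule_format, of t] at_within_interior[of t "{t0..}"] by simp

lemma p_cont: "continuous_on {t0..} p"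
  using sol by (auto simp: continuous_on_eq_continuous_within intro: has_vector_derivative_continuous)

lemma F_cont: "continuous_on {t0..} (\<lambda>t. F_err \<beta> q (p t))"
proof (rule continuous_on_compose2[OF _ p_cont])
  show "continuous_on UNIV (F_err \<beta> q)"
    by (rule continuous_at_imp_continuous_on) (auto intro: has_derivative_continuous[OF F_deriv])
qed auto

lemma F_der: "t > t0 \<Longrightarrow> ((\<lambda>t. F_err \<beta> q (p t)) has_real_derivative
   (\<Sum>i\<in>UNIV. G \<beta> q (p t) i \<bullet> closed_loop \<beta> \<sigma>1 \<sigma>2 \<epsilon> r vmax q (p t) $ i)) (at t)"
  by (rule chain_real[OF p_at F_deriv])

lemma comp_cont: "continuous_on {t0..} (\<lambda>t. (norm (p t $ i))\<^sup>2)"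
  by (intro continuous_intros continuous_on_compose2[OF _ p_cont, of UNIV "\<lambda>x. x $ i"]) auto

lemma comp_der: "t > t0 \<Longrightarrow> ((\<lambda>t. (norm (p t $ i))\<^sup>2) has_real_derivative
   2 * (p t $ i \<bullet> closed_loop \<beta> \<sigma>1 \<sigma>2 \<epsilon> r vmax q (p t) $ i)) (at t)"
  using chain_real[OF p_at normsq_deriv] by simp

lemma Rb_nonneg: "Rb \<sigma>1 \<sigma>2 r q TYPE('n) \<ge> 0"
  unfolding Rb_def[OF pos] using pos R0_nonneg[of q] by simp

lemma comp_bound:
  assumes "t \<ge> t0"
  shows "norm (p t $ i) \<le> max (norm (p t0 $ i)) (Rb \<sigma>1 \<sigma>2 r q TYPE('n))"
proof (rule ccontr)
  define M where "M = max (norm (p t0 $ i)) (Rb \<sigma>1 \<sigma>2 r q TYPE('n))"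
  define B where "B = M\<^sup>2"
  define f where "f = (\<lambda>t. (norm (p t $ i))\<^sup>2)"
  have M0: "M \<ge> 0" unfolding M_def using Rb_nonneg by linarith
  have fle: "f s \<le> B \<longleftrightarrow> norm (p s $ i) \<le> M" for s
    unfolding f_def B_def using M0 by (simp add: power_mono_iff abs_le_iff)
  assume "\<not> norm (p t $ i) \<le> max (norm (p t0 $ i)) (Rb \<sigma>1 \<sigma>2 r q TYPE('n))"
  hence ft: "\<not> f t \<le> B" using fle M_def by simp
  define S where "S = {t0..t} \<inter> f -` {..B}"
  have fc: "continuous_on {t0..t} f" unfolding f_def
    by (rule continuous_on_subset[OF comp_cont]) auto
  have "closed S" unfolding S_def by (rule continuous_closed_preimage[OF fc]) auto
  moreover have "bounded S" unfolding S_def by (rule bounded_subset[of "{t0..t}"]) auto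
  ultimately have cS: "compact S" by (simp add: compact_eq_bounded_closed)
  have "t0 \<in> S" unfolding S_def using assms fle[of t0] by (auto simp: M_def)
  hence "S \<noteq> {}" by auto
  then obtain s where sS: "s \<in> S" and smax: "\<And>y. y \<in> S \<Longrightarrow> y \<le> s"
    using compact_attains_sup[OF cS] by blast
  have st: "t0 \<le> s" "s \<le> t" "f s \<le> B" using sS by (auto simp: S_def)
  have "f t \<le> f s"
  proof (rule DERIV_nonpos_imp_decreasing_open[OF st(2)])
    fix y assume y: "s < y" "y < t"
    hence "y \<notin> S" using smax by force
    hence "\<not> f y \<le> B" using y st by (auto simp: S_def)
    hence "norm (p y $ i) \<ge> Rb \<sigma>1 \<sigma>2 r q TYPE('n)" using fle M_def by auto
    hence "p y $ i \<bullet> closed_loop \<beta> \<sigma>1 \<sigma>2 \<epsilon> r vmax q (p y) $ i \<le> 0"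
      by (rule barrier[OF pos])
    moreover have "(f has_real_derivative 2 * (p y $ i \<bullet> closed_loop \<beta> \<sigma>1 \<sigma>2 \<epsilon> r vmax q (p y) $ i)) (at y)"
      unfolding f_def using y st by (intro comp_der) auto
    ultimately show "\<exists>z. (f has_real_derivative z) (at y) \<and> z \<le> 0" by auto
  next
    show "continuous_on {s..t} f" using st by (intro continuous_on_subset[OF fc]) auto
  qed
  thus False using st ft by simp
qed

end



lemma cont_mass: "continuous (at x) (\<lambda>x. mass \<beta> q x k)"
  by (rule has_derivative_continuous[OF mass_deriv])

lemma cont_ek: "continuous (at x) (\<lambda>x. ek \<beta> q x k i)"
  by (rule has_derivative_continuous[OF ek_deriv])

lemma cont_nth: "continuous (at x) (\<lambda>x. x $ i)"
  by (intro isCont_vec_nth continuous_ident)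

lemma cont_G: "continuous (at x) (\<lambda>x. G \<beta> q x i)"
  unfolding G_def
  by (intro continuous_intros cont_mass cont_ek cont_nth) (simp add: mass_nz)

definition hG :: "real \<Rightarrow> ('k::finite \<Rightarrow> real^'d) \<Rightarrow> (real^'d)^'n::finite \<Rightarrow> real" where
  "hG \<beta> q x = (\<Sum>i\<in>UNIV. (norm (G \<beta> q x i))\<^sup>2)"

lemma hG_cont: "continuous_on A (hG \<beta> q)"
  unfolding hG_def
  by (rule continuous_at_imp_continuous_on) (auto intro!: continuous_intros cont_G)

lemma hG_zero_crit: assumes "hG \<beta> q x = 0" shows "x \<in> crit_set \<beta> q"
proof -
  have "\<forall>i\<in>UNIV. (norm (G \<beta> q x i))\<^sup>2 = 0"
    using assms unfolding hG_def by (subst sum_nonneg_eq_0_iff[symmetric]) auto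
  hence G0: "G \<beta> q x i = 0" for i by simp
  have "(F_err \<beta> q has_derivative (\<lambda>h. \<Sum>i\<in>UNIV. G \<beta> q x i \<bullet> h$i)) (at x)" by (rule F_deriv)
  hence "(F_err \<beta> q has_derivative (\<lambda>h. 0)) (at x)" by (simp add: G0)
  thus ?thesis by (simp add: crit_set_def)
qed

context
  fixes \<beta> \<sigma>1 \<sigma>2 \<epsilon> r vmax t0 :: real and q :: "'k::finite \<Rightarrow> real^'d"
    and p :: "real \<Rightarrow> (real^'d)^'n::finite"
  assumes pos: "\<beta> > 0" "\<sigma>1 > 0" "\<sigma>2 > 0" "\<epsilon> > 0" "\<epsilon> < 1" "r > 0" "vmax > 0"
    and sol: "\<forall>t\<ge>t0. (p has_vector_derivative
               closed_loop \<beta> \<sigma>1 \<sigma>2 \<epsilon> r vmax q (p t)) (at t within {t0..})"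
begin

lemma CL_norm: "norm (closed_loop \<beta> \<sigma>1 \<sigma>2 \<epsilon> r vmax q x) \<le> real CARD('n) * vmax"
  for x :: "(real^'d)^'n"
proof -
  have "norm (closed_loop \<beta> \<sigma>1 \<sigma>2 \<epsilon> r vmax q x) \<le> (\<Sum>i\<in>UNIV. norm (closed_loop \<beta> \<sigma>1 \<sigma>2 \<epsilon> r vmax q x $ i))"
    by (rule norm_vec_le_sum)
  also have "\<dots> \<le> (\<Sum>i\<in>(UNIV::'n set). vmax)"
    by (intro sum_mono) (simp add: cl_nth[OF pos] norm_sat[OF pos(7)])
  finally show ?thesis by simp
qed

lemma p_lip: assumes "s \<ge> t0" "t \<ge> t0"
  shows "norm (p t - p s) \<le> (real CARD('n) * vmax) * \<bar>t - s\<bar>"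
proof -
  have "norm (p t - p s) \<le> (real CARD('n) * vmax) * norm (t - s)"
  proof (rule differentiable_bound[of "{t0..}" p "\<lambda>x h. h *\<^sub>R closed_loop \<beta> \<sigma>1 \<sigma>2 \<epsilon> r vmax q (p x)"])
    show "convex {t0..}" by (rule convex_real_interval)
    fix x assume "x \<in> {t0..}"
    thus "(p has_derivative (\<lambda>h. h *\<^sub>R closed_loop \<beta> \<sigma>1 \<sigma>2 \<epsilon> r vmax q (p x))) (at x within {t0..})"
      using sol by (simp add: has_vector_derivative_def)
    show "onorm (\<lambda>h. h *\<^sub>R closed_loop \<beta> \<sigma>1 \<sigma>2 \<epsilon> r vmax q (p x)) \<le> real CARD('n) * vmax"
    proof (rule onorm_bound)
      show "0 \<le> real CARD('n) * vmax" using pos by simp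
      fix h :: real
      show "norm (h *\<^sub>R closed_loop \<beta> \<sigma>1 \<sigma>2 \<epsilon> r vmax q (p x)) \<le> real CARD('n) * vmax * norm h"
        using CL_norm[of "p x"] by (simp add: mult.commute mult_left_mono)
    qed
  qed (use assms in auto)
  thus ?thesis by simp
qed

definition Bp :: real where "Bp = (\<Sum>i\<in>UNIV. norm (p t0 $ i)) + Rb \<sigma>1 \<sigma>2 r q TYPE('n)"

lemma p_bound: assumes "t \<ge> t0" shows "norm (p t $ i) \<le> Bp"
proof -
  have "norm (p t0 $ i) \<le> (\<Sum>i\<in>UNIV. norm (p t0 $ i))" by (rule member_le_sum) auto
  moreover have "(\<Sum>i\<in>UNIV. norm (p t0 $ i)) \<ge> 0" by (intro sum_nonneg) auto
  ultimately show ?thesis using comp_bound[OF pos sol assms, of i] Rb_nonneg[OF pos sol]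
    unfolding Bp_def by linarith
qed

definition c0 :: real where
  "c0 = (\<sigma>1 * \<epsilon> / (2 * \<beta> * real CARD('k))) *
        min 1 (vmax / ((\<sigma>1 / real CARD('k)) * (R0 q + Bp) + \<sigma>2 * (real CARD('n) * r)))"

lemma c0_pos: "c0 > 0"
proof -
  have "Bp \<ge> 0" using p_bound[of t0] norm_ge_zero by (meson dual_order.trans order_refl)
  hence "(\<sigma>1 / real CARD('k)) * (R0 q + Bp) + \<sigma>2 * (real CARD('n) * r) > 0"
    using pos R0_nonneg[of q] by (intro add_nonneg_pos) auto
  thus ?thesis unfolding c0_def using pos by auto
qed

lemma F_dec: assumes "t > t0"
  shows "(\<Sum>i\<in>UNIV. G \<beta> q (p t) i \<bullet> closed_loop \<beta> \<sigma>1 \<sigma>2 \<epsilon> r vmax q (p t) $ i) \<le> - c0 * hG \<beta> q (p t)"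
proof -
  define U where "U = (\<sigma>1 / real CARD('k)) * (R0 q + Bp) + \<sigma>2 * (real CARD('n) * r)"
  define K where "K = \<sigma>1 * \<epsilon> / (2 * \<beta> * real CARD('k))"
  have K0: "K > 0" unfolding K_def using pos by simp
  have "Bp \<ge> 0" using p_bound[of t0] norm_ge_zero by (meson dual_order.trans order_refl)
  hence U0: "U > 0" unfolding U_def
    using pos R0_nonneg[of q] by (intro add_nonneg_pos) auto
  have "(\<Sum>i\<in>UNIV. G \<beta> q (p t) i \<bullet> closed_loop \<beta> \<sigma>1 \<sigma>2 \<epsilon> r vmax q (p t) $ i)
     \<le> (\<Sum>i\<in>UNIV. - c0 * (norm (G \<beta> q (p t) i))\<^sup>2)"
  proof (rule sum_mono)
    fix i
    let ?u = "v_ms \<beta> \<sigma>1 q (p t) i + v_cv \<beta> \<sigma>1 \<sigma>2 \<epsilon> r q (p t) i"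
    have "(\<sigma>1 / real CARD('k)) * (R0 q + norm (p t $ i)) \<le> (\<sigma>1 / real CARD('k)) * (R0 q + Bp)"
      using p_bound[of t i] assms pos by (intro mult_left_mono) auto
    hence "norm ?u \<le> U" unfolding U_def
      using u_norm[OF pos, where x="p t" and q=q and i=i] by linarith
    hence sl: "satl vmax ?u \<ge> min 1 (vmax / U)" by (rule satl_lower[OF pos(7) _ U0])
    have "G \<beta> q (p t) i \<bullet> closed_loop \<beta> \<sigma>1 \<sigma>2 \<epsilon> r vmax q (p t) $ i
       \<le> - K * satl vmax ?u * (norm (G \<beta> q (p t) i))\<^sup>2"
      unfolding K_def by (rule dissip[OF pos])
    also have "\<dots> \<le> - K * min 1 (vmax / U) * (norm (G \<beta> q (p t) i))\<^sup>2"
      using sl K0 by (intro mult_right_mono) auto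
    finally show "G \<beta> q (p t) i \<bullet> closed_loop \<beta> \<sigma>1 \<sigma>2 \<epsilon> r vmax q (p t) $ i
       \<le> - c0 * (norm (G \<beta> q (p t) i))\<^sup>2"
      by (simp add: c0_def K_def U_def)
  qed
  also have "\<dots> = - c0 * hG \<beta> q (p t)" unfolding hG_def by (simp add: sum_distrib_left)
  finally show ?thesis .
qed

end



lemma F_lower: fixes x :: "(real^'d)^'n::finite" and q :: "'k::finite \<Rightarrow> real^'d"
  assumes "\<beta> > 0" shows "F_err \<beta> q x \<ge> - ln (real CARD('k)) / 2"
proof -
  have "(\<Sum>k\<in>UNIV. ln (mass \<beta> q x k)) \<le> 0"
    using mass_le1[of \<beta> q x] mass_pos[of \<beta> q x] assms by (intro sum_nonpos) auto
  hence "(1 / real CARD('k)) * (\<Sum>k\<in>UNIV. ln (mass \<beta> q x k)) \<le> 0"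
    by (simp add: divide_nonpos_pos)
  thus ?thesis unfolding F_simp by linarith
qed

lemma hG_nonneg: "hG \<beta> q x \<ge> 0"
  unfolding hG_def by (intro sum_nonneg) auto

context
  fixes \<beta> \<sigma>1 \<sigma>2 \<epsilon> r vmax t0 :: real and q :: "'k::finite \<Rightarrow> real^'d"
    and p :: "real \<Rightarrow> (real^'d)^'n::finite"
  assumes pos: "\<beta> > 0" "\<sigma>1 > 0" "\<sigma>2 > 0" "\<epsilon> > 0" "\<epsilon> < 1" "r > 0" "vmax > 0"
    and sol: "\<forall>t\<ge>t0. (p has_vector_derivative
               closed_loop \<beta> \<sigma>1 \<sigma>2 \<epsilon> r vmax q (p t)) (at t within {t0..})"
begin

lemma main_conv:
  assumes e: "e > 0"
  shows "\<forall>\<^sub>F t in at_top. \<exists>x\<in>crit_set \<beta> q. dist (p t) x < e"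
proof -
  define D where "D = (crit_set \<beta> q :: ((real^'d)^'n) set)"
  define B where "B = Bp \<sigma>1 \<sigma>2 r t0 q p"
  define c where "c = c0 \<beta> \<sigma>1 \<sigma>2 \<epsilon> r vmax t0 q p"
  have c: "c > 0" unfolding c_def by (rule c0_pos[OF pos sol])
  define L where "L = real CARD('n) * vmax"
  have L: "L > 0" unfolding L_def using pos by simp
  define \<tau> where "\<tau> = e / (2 * L)"
  have \<tau>: "\<tau> > 0" unfolding \<tau>_def using e L by simp
  define K where "K = {x :: (real^'d)^'n. \<forall>i. norm (x$i) \<le> B} \<inter> (\<Inter>y\<in>D. {x. e/2 \<le> dist x y})"
  have "closed K" unfolding K_def
    by (intro closed_Int closed_INT ballI closed_Collect_all closed_Collect_le continuous_intros
          continuous_on_compose2[OF _ continuous_on_id, of UNIV "\<lambda>x. x $ _"]) 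
       (auto intro: continuous_at_imp_continuous_on cont_nth)
  moreover have "bounded K"
  proof -
    have "norm x \<le> real CARD('n) * B" if "x \<in> K" for x
    proof -
      have "norm x \<le> (\<Sum>i\<in>UNIV. norm (x$i))" by (rule norm_vec_le_sum)
      also have "\<dots> \<le> (\<Sum>i\<in>(UNIV::'n set). B)" using that by (intro sum_mono) (auto simp: K_def)
      finally show ?thesis by simp
    qed
    thus ?thesis unfolding bounded_iff by blast
  qed
  ultimately have cK: "compact K" by (simp add: compact_eq_bounded_closed)
  obtain \<delta> where \<delta>: "\<delta> > 0" "\<And>x. x \<in> K \<Longrightarrow> hG \<beta> q x \<ge> \<delta>"
  proof (cases "K = {}")
    case True thus ?thesis using that[of 1] by auto
  next
    case False
    then obtain x0 where x0: "x0 \<in> K" "\<And>y. y \<in> K \<Longrightarrow> hG \<beta> q x0 \<le> hG \<beta> q y"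
      using continuous_attains_inf[OF cK False hG_cont] by blast
    have "hG \<beta> q x0 \<noteq> 0"
    proof
      assume "hG \<beta> q x0 = 0"
      hence "x0 \<in> D" unfolding D_def by (rule hG_zero_crit)
      hence "e/2 \<le> dist x0 x0" using x0(1) by (auto simp: K_def)
      thus False using e by simp
    qed
    hence "hG \<beta> q x0 > 0" using hG_nonneg[of \<beta> q x0] by linarith
    thus ?thesis using that[of "hG \<beta> q x0"] x0 by auto
  qed
  define Fp where "Fp = (\<lambda>t. F_err \<beta> q (p t))"
  define A where "A = Fp ` {t0+1..}"
  have bdd: "bdd_below A" unfolding A_def Fp_def
    using F_lower[OF pos(1)] by (intro bdd_belowI2) auto
  have Ane: "A \<noteq> {}" unfolding A_def by auto
  have "Inf A < Inf A + c * \<delta> * \<tau>" using c \<delta> \<tau> by simp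
  then obtain a where "a \<in> A" "a < Inf A + c * \<delta> * \<tau>" using cInf_lessD[OF Ane] by blast
  then obtain T where T: "T \<ge> t0 + 1" "Fp T < Inf A + c * \<delta> * \<tau>" unfolding A_def by auto
  have Fder: "(Fp has_real_derivative (\<Sum>i\<in>UNIV. G \<beta> q (p t) i \<bullet> closed_loop \<beta> \<sigma>1 \<sigma>2 \<epsilon> r vmax q (p t) $ i)) (at t)"
    and Fdle: "(\<Sum>i\<in>UNIV. G \<beta> q (p t) i \<bullet> closed_loop \<beta> \<sigma>1 \<sigma>2 \<epsilon> r vmax q (p t) $ i) \<le> - c * hG \<beta> q (p t)"
    if "t > t0" for t
    using F_der[OF pos sol that] F_dec[OF pos sol that] by (simp_all add: Fp_def c_def)
  have Fc: "continuous_on {a..b} Fp" if "a \<ge> t0" for a b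
    unfolding Fp_def using that by (intro continuous_on_subset[OF F_cont[OF pos sol]]) auto
  have mono: "Fp t \<le> Fp T" if "t \<ge> T" for t
  proof (rule DERIV_nonpos_imp_decreasing_open[OF that _ Fc])
    fix y assume y: "T < y" "y < t"
    hence "y > t0" using T by simp
    moreover have "- c * hG \<beta> q (p y) \<le> 0" using c hG_nonneg[of \<beta> q "p y"] by (simp add: mult_nonneg_nonneg)
    ultimately show "\<exists>z. (Fp has_real_derivative z) (at y) \<and> z \<le> 0"
      using Fder Fdle by (meson order_trans)
  qed (use T in simp)
  show ?thesis unfolding eventually_at_top_linorder D_def[symmetric]
  proof (intro exI allI impI)
    fix t assume tT: "t \<ge> T"
    show "\<exists>x\<in>D. dist (p t) x < e"
    proof (rule ccontr)
      assume "\<not> ?thesis"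
      hence far: "\<And>y. y \<in> D \<Longrightarrow> dist (p t) y \<ge> e" by (meson not_less)
      have t0t: "t > t0" using tT T by simp
      have inK: "p s \<in> K" if "t \<le> s" "s \<le> t + \<tau>" for s
      proof -
        have "norm (p s - p t) \<le> L * \<bar>s - t\<bar>"
          unfolding L_def using t0t that by (intro p_lip[OF pos sol]) auto
        also have "\<dots> \<le> L * \<tau>" using that L by (intro mult_left_mono) auto
        also have "\<dots> = e / 2" unfolding \<tau>_def using L by simp
        finally have ns: "norm (p s - p t) \<le> e / 2" .
        have "e / 2 \<le> dist (p s) y" if "y \<in> D" for y
          using far[OF that] ns dist_triangle[of "p t" y "p s"]
          by (simp add: dist_norm norm_minus_commute)
        moreover have "norm (p s $ i) \<le> B" for i
          unfolding B_def using that t0t by (intro p_bound[OF pos sol]) auto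
        ultimately show ?thesis unfolding K_def by auto
      qed
      have "Fp (t + \<tau>) + c * \<delta> * (t + \<tau>) \<le> Fp t + c * \<delta> * t"
      proof (rule DERIV_nonpos_imp_decreasing_open[of t "t + \<tau>" "\<lambda>s. Fp s + c * \<delta> * s"])
        show "t \<le> t + \<tau>" using \<tau> by simp
        fix y assume y: "t < y" "y < t + \<tau>"
        hence y0: "y > t0" using t0t by simp
        have "hG \<beta> q (p y) \<ge> \<delta>" using \<delta>(2)[OF inK] y by auto
        hence "- c * hG \<beta> q (p y) + c * \<delta> \<le> 0" using c by (simp add: mult_left_mono)
        moreover have "((\<lambda>s. Fp s + c * \<delta> * s) has_real_derivative
            (\<Sum>i\<in>UNIV. G \<beta> q (p y) i \<bullet> closed_loop \<beta> \<sigma>1 \<sigma>2 \<epsilon> r vmax q (p y) $ i) + c * \<delta>) (at y)"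
          using Fder[OF y0] by (auto intro!: derivative_eq_intros)
        ultimately show "\<exists>z. ((\<lambda>s. Fp s + c * \<delta> * s) has_real_derivative z) (at y) \<and> z \<le> 0"
          using Fdle[OF y0] by (intro exI[of _ "(\<Sum>i\<in>UNIV. G \<beta> q (p y) i \<bullet> closed_loop \<beta> \<sigma>1 \<sigma>2 \<epsilon> r vmax q (p y) $ i) + c * \<delta>"]) auto
      next
        show "continuous_on {t..t + \<tau>} (\<lambda>s. Fp s + c * \<delta> * s)"
          using Fc[of t "t + \<tau>"] t0t by (intro continuous_intros) auto
      qed
      hence "Fp (t + \<tau>) \<le> Fp t - c * \<delta> * \<tau>" by (simp add: algebra_simps)
      also have "\<dots> \<le> Fp T - c * \<delta> * \<tau>" using mono[OF tT] by simp
      also have "\<dots> < Inf A" using T by simp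
      finally have "Fp (t + \<tau>) < Inf A" .
      moreover have "Inf A \<le> Fp (t + \<tau>)"
        using bdd T tT \<tau> unfolding A_def by (intro cInf_lower) auto
      ultimately show False by simp
    qed
  qed
qed

end


theorem theorem3:
  fixes q :: "'k::finite \<Rightarrow> real^'d"
    and p :: "real \<Rightarrow> (real^'d)^'n::finite"
    and \<beta> \<sigma>1 \<sigma>2 \<epsilon> r_avoid v_max t0 :: real
  assumes "CARD('n) \<ge> 2"
    and "\<beta> > 0" "\<sigma>1 > 0" "\<sigma>2 > 0" "0 < \<epsilon>" "\<epsilon> < 1" "r_avoid > 0" "v_max > 0"
    and sol: "\<forall>t\<ge>t0. (p has_vector_derivative
               closed_loop \<beta> \<sigma>1 \<sigma>2 \<epsilon> r_avoid v_max q (p t)) (at t within {t0..})"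
  shows "\<forall>e>0. \<forall>\<^sub>F t in at_top. \<exists>x\<in>crit_set \<beta> q. dist (p t) x < e"
  using main_conv[OF assms(2-8) sol] by blast

end
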